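(* Let $F$ be an infinite field, let $G=\mathrm{GL}_{n_1}\times\dots\times\mathrm{GL}_{n_k}$, embedded in the standard way in $M=\mathrm M_{n_1}\times\dots\times\mathrm M_{n_k}$, and let $A,B\subset G$ be $F$-subgroups whose Zariski closures in $M$ are affine (linear) subspaces. Then: (1) for any $x,y\in G(F)$, if the variety $\{(a,b)\in A\times B: axb=y\}$ has a point over an algebraic closure $\overline F$, then it has an $F$-rational point; (2) if $(G,A)$ is a spherical pair (of algebraic groups), then it is an $F$-spherical pair, i.e. $P(F)\backslash G(F)/A(F)$ is finite for every parabolic subgroup $P\subset G$.
   Context: $\mathrm M_n$ denotes the affine space of $n\times n$ matrices. A pair $(G,A)$ of algebraic groups is spherical if a Borel subgroup of $G$ has an open orbit on $G/A$ (over $\overline F$), equivalently there are finitely many orbits of each parabolic on $G/A$ over $\overline F$. *)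

theory Defs
  imports "Jordan_Normal_Form.Matrix" "HOL-Computational_Algebra.Polynomial"
begin

definition Mset :: "nat list \<Rightarrow> 'a::field mat list set" where
  "Mset ns = {xs. length xs = length ns \<and> (\<forall>i<length ns. xs ! i \<in> carrier_mat (ns ! i) (ns ! i))}"

definition Gset :: "nat list \<Rightarrow> 'a::field mat list set" where
  "Gset ns = {xs \<in> Mset ns. \<forall>i<length ns. invertible_mat (xs ! i)}"

definition mmul :: "'a::field mat list \<Rightarrow> 'a mat list \<Rightarrow> 'a mat list" where
  "mmul xs ys = map2 (*) xs ys"

definition mone :: "nat list \<Rightarrow> 'a::field mat list" where
  "mone ns = map (\<lambda>n. 1\<^sub>m n) ns"

definition lin_pair :: "nat list \<Rightarrow> 'a::field mat list \<Rightarrow> 'a mat list \<Rightarrow> 'a" where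
  "lin_pair ns l x = (\<Sum>i<length ns. \<Sum>r<ns ! i. \<Sum>c<ns ! i. (l ! i) $$ (r, c) * (x ! i) $$ (r, c))"

text \<open>A family of affine-linear equations on M with coefficients in F.\<close>
definition lin_eqns :: "nat list \<Rightarrow> ('a::field mat list \<times> 'a) set \<Rightarrow> bool" where
  "lin_eqns ns E \<longleftrightarrow> (\<forall>(l, c) \<in> E. l \<in> Mset ns)"

text \<open>K-points (K an extension via phi) of the affine subspace of M cut out by the F-equations E.\<close>
definition affine_locus :: "('a::field \<Rightarrow> 'b::field) \<Rightarrow> nat list \<Rightarrow> ('a mat list \<times> 'a) set \<Rightarrow> 'b mat list set" where
  "affine_locus \<phi> ns E = {x \<in> Mset ns. \<forall>(l, c) \<in> E. lin_pair ns (map (map_mat \<phi>) l) x = \<phi> c}"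

definition subgrp_pts :: "('a::field \<Rightarrow> 'b::field) \<Rightarrow> nat list \<Rightarrow> ('a mat list \<times> 'a) set \<Rightarrow> 'b mat list set" where
  "subgrp_pts \<phi> ns E = affine_locus \<phi> ns E \<inter> Gset ns"

definition is_subgroup :: "nat list \<Rightarrow> 'a::field mat list set \<Rightarrow> bool" where
  "is_subgroup ns H \<longleftrightarrow> H \<subseteq> Gset ns \<and> mone ns \<in> H \<and> (\<forall>x\<in>H. \<forall>y\<in>H. mmul x y \<in> H)
     \<and> (\<forall>x\<in>H. \<exists>y\<in>H. mmul x y = mone ns)"

definition is_subspace :: "nat \<Rightarrow> 'a::field vec set \<Rightarrow> bool" where
  "is_subspace n S \<longleftrightarrow> S \<subseteq> carrier_vec n \<and> 0\<^sub>v n \<in> S \<and> (\<forall>u\<in>S. \<forall>v\<in>S. u + v \<in> S)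
     \<and> (\<forall>c. \<forall>v\<in>S. c \<cdot>\<^sub>v v \<in> S)"

text \<open>Points of a parabolic subgroup of G over the field: stabilizer in G of a flag in each factor.\<close>
definition parabolic :: "nat list \<Rightarrow> 'a::field mat list set \<Rightarrow> bool" where
  "parabolic ns P \<longleftrightarrow> (\<exists>Fl :: nat \<Rightarrow> 'a vec set set.
     (\<forall>i<length ns. (\<forall>S\<in>Fl i. is_subspace (ns ! i) S) \<and> (\<forall>S\<in>Fl i. \<forall>T\<in>Fl i. S \<subseteq> T \<or> T \<subseteq> S))
     \<and> P = {g \<in> Gset ns. \<forall>i<length ns. \<forall>S\<in>Fl i. \<forall>v\<in>S. (g ! i) *\<^sub>v v \<in> S})"

definition double_cosets :: "nat list \<Rightarrow> 'a::field mat list set \<Rightarrow> 'a mat list set \<Rightarrow> 'a mat list set set" where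
  "double_cosets ns P H = (\<lambda>g. {mmul (mmul p g) h | p h. p \<in> P \<and> h \<in> H}) ` Gset ns"

definition spherical_fin :: "nat list \<Rightarrow> 'a::field mat list set \<Rightarrow> bool" where
  "spherical_fin ns H \<longleftrightarrow> (\<forall>P. parabolic ns P \<longrightarrow> finite (double_cosets ns P H))"

definition is_alg_closure :: "('a::field \<Rightarrow> 'b::field) \<Rightarrow> bool" where
  "is_alg_closure \<phi> \<longleftrightarrow> \<phi> 0 = 0 \<and> \<phi> 1 = 1 \<and> (\<forall>x y. \<phi> (x + y) = \<phi> x + \<phi> y) \<and> (\<forall>x y. \<phi> (x * y) = \<phi> x * \<phi> y)
     \<and> (\<forall>p :: 'b poly. degree p > 0 \<longrightarrow> (\<exists>z. poly p z = 0))
     \<and> (\<forall>z :: 'b. \<exists>p :: 'a poly. p \<noteq> 0 \<and> poly (map_poly \<phi> p) z = 0)"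

end

theory Submission
  imports Defs "Jordan_Normal_Form.Determinant"
begin

definition gsp :: "('a::field \<Rightarrow> 'b::field) \<Rightarrow> 'b list \<Rightarrow> (nat \<Rightarrow> 'a) \<Rightarrow> 'b" where
  "gsp h t \<alpha> = h (\<alpha> 0) + (\<Sum>j<length t. t!j * h (\<alpha> (Suc j)))"

definition indep :: "('a::field \<Rightarrow> 'b::field) \<Rightarrow> 'b list \<Rightarrow> bool" where
  "indep h es \<longleftrightarrow> (\<forall>\<alpha>. gsp h es \<alpha> = 0 \<longrightarrow> (\<forall>j\<le>length es. \<alpha> j = 0))"

definition inspan :: "('a::field \<Rightarrow> 'b::field) \<Rightarrow> 'b list \<Rightarrow> 'b \<Rightarrow> bool" where
  "inspan h es s \<longleftrightarrow> (\<exists>\<alpha>. s = gsp h es \<alpha>)"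

definition cf :: "('a::field \<Rightarrow> 'b::field) \<Rightarrow> 'b list \<Rightarrow> 'b \<Rightarrow> nat \<Rightarrow> 'a" where
  "cf h es s = (SOME \<alpha>. s = gsp h es \<alpha>)"

lemma cf_spec: "inspan h es s \<Longrightarrow> gsp h es (cf h es s) = s"
  unfolding inspan_def cf_def by (metis (mono_tags) someI_ex)

lemma field_hom_id: "field_hom (id :: 'a::field \<Rightarrow> 'a)"
  by (unfold_locales, auto)

context field_hom begin

lemma gsp_add: "gsp hom t \<alpha> + gsp hom t \<beta> = gsp hom t (\<lambda>k. \<alpha> k + \<beta> k)"
  unfolding gsp_def by (simp add: hom_add distrib_left sum.distrib algebra_simps)

lemma gsp_diff: "gsp hom t \<alpha> - gsp hom t \<beta> = gsp hom t (\<lambda>k. \<alpha> k - \<beta> k)"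
  unfolding gsp_def by (simp add: hom_distribs right_diff_distrib sum_subtractf algebra_simps)

lemma gsp_scale: "hom c * gsp hom t \<alpha> = gsp hom t (\<lambda>k. c * \<alpha> k)"
  unfolding gsp_def by (simp add: hom_mult distrib_left sum_distrib_left algebra_simps)

lemma gsp_sum: "(\<Sum>i\<in>I. gsp hom t (\<alpha> i)) = gsp hom t (\<lambda>k. \<Sum>i\<in>I. \<alpha> i k)"
  unfolding gsp_def by (simp add: hom_sum sum.distrib sum_distrib_left sum.swap[of _ I])

lemma gsp_zero: "gsp hom t (\<lambda>k. 0) = 0"
  unfolding gsp_def by simp

lemma gsp_const: "gsp hom t (\<lambda>k. if k = 0 then c else 0) = hom c"
  unfolding gsp_def by simp

lemma gsp_map: "gsp hom (map hom rs) \<alpha> = hom (gsp id rs \<alpha>)"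
  unfolding gsp_def by (simp add: hom_distribs)

lemma gsp_upd: assumes "k < length t"
  shows "gsp hom (t[k:=z]) \<alpha> = gsp hom (t[k:=0]) \<alpha> + z * hom (\<alpha> (Suc k))"
proof -
  have "(\<Sum>j<length t. t[k:=z]!j * hom (\<alpha> (Suc j)))
     = (\<Sum>j<length t. t[k:=0]!j * hom (\<alpha> (Suc j)) + (if j = k then z * hom (\<alpha> (Suc k)) else 0))"
    using assms by (intro sum.cong) (auto simp: nth_list_update)
  also have "\<dots> = (\<Sum>j<length t. t[k:=0]!j * hom (\<alpha> (Suc j))) + z * hom (\<alpha> (Suc k))"
    using assms by (simp add: sum.distrib)
  finally show ?thesis unfolding gsp_def by simp
qed

lemma indep_nil: "indep hom []"
  unfolding indep_def gsp_def by simp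

lemma gsp_snoc: "gsp hom (es @ [t]) \<alpha> = gsp hom es \<alpha> + t * hom (\<alpha> (Suc (length es)))"
  unfolding gsp_def by (simp add: nth_append)

lemma indep_snoc: assumes "indep hom es" "\<not> inspan hom es t"
  shows "indep hom (es @ [t])"
  unfolding indep_def
proof (rule allI, rule impI)
  fix \<alpha> assume z: "gsp hom (es @ [t]) \<alpha> = 0"
  let ?m = "length es"
  have a: "\<alpha> (Suc ?m) = 0"
  proof (rule ccontr)
    assume ne: "\<alpha> (Suc ?m) \<noteq> 0"
    from z have "gsp hom es \<alpha> + t * hom (\<alpha> (Suc ?m)) = 0" by (simp add: gsp_snoc)
    hence "t * hom (\<alpha> (Suc ?m)) = - gsp hom es \<alpha>" by (simp add: eq_neg_iff_add_eq_0 add.commute)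
    hence "t = - gsp hom es \<alpha> / hom (\<alpha> (Suc ?m))" using ne by (metis hom_0_iff nonzero_mult_div_cancel_right)
    also have "\<dots> = hom (- 1 / \<alpha> (Suc ?m)) * gsp hom es \<alpha>" by (simp add: hom_distribs)
    also have "\<dots> = gsp hom es (\<lambda>k. (- 1 / \<alpha> (Suc ?m)) * \<alpha> k)" by (rule gsp_scale)
    finally show False using assms(2) unfolding inspan_def by blast
  qed
  with z have "gsp hom es \<alpha> = 0" by (simp add: gsp_snoc)
  with assms(1) have "\<forall>j\<le>?m. \<alpha> j = 0" unfolding indep_def by blast
  with a show "\<forall>j\<le>length (es @ [t]). \<alpha> j = 0" by (auto simp: le_Suc_eq)
qed

lemma gsp_pad: "gsp hom (es @ fs) (\<lambda>k. if k \<le> length es then \<alpha> k else 0) = gsp hom es \<alpha>"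
proof -
  have "(\<Sum>j<length (es @ fs). (es @ fs) ! j * hom (if Suc j \<le> length es then \<alpha> (Suc j) else 0))
     = (\<Sum>j<length es. es ! j * hom (\<alpha> (Suc j)))"
    by (rule sum.mono_neutral_cong_right) (auto simp: nth_append)
  thus ?thesis unfolding gsp_def by simp
qed

lemma inspan_append: "inspan hom es s \<Longrightarrow> inspan hom (es @ fs) s"
  unfolding inspan_def using gsp_pad by metis

lemma extend: assumes "finite T" "indep hom es"
  shows "\<exists>fs. indep hom (es @ fs) \<and> (\<forall>s\<in>T. inspan hom (es @ fs) s)"
  using assms(1)
proof (induction T rule: finite_induct)
  case empty thus ?case using assms(2) by (intro exI[of _ "[]"]) auto
next
  case (insert t T)
  then obtain fs where fs: "indep hom (es @ fs)" "\<forall>s\<in>T. inspan hom (es @ fs) s" by blast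
  show ?case
  proof (cases "inspan hom (es @ fs) t")
    case True thus ?thesis using fs by (intro exI[of _ fs]) auto
  next
    case False
    have "indep hom (es @ fs @ [t])" using indep_snoc[OF fs(1) False] by simp
    moreover have "\<forall>s\<in>insert t T. inspan hom (es @ fs @ [t]) s"
      using fs(2) inspan_append[of "es @ fs" _ "[t]"] gsp_snoc unfolding inspan_def
      apply auto
      apply (rule exI[of _ "\<lambda>k. if k = Suc (length es + length fs) then 1 else 0"])
      apply (simp add: gsp_snoc[of "es @ fs", simplified] gsp_def)
      done
    ultimately show ?thesis by (intro exI[of _ "fs @ [t]"]) auto
  qed
qed

lemma unique: assumes "indep hom es" "gsp hom es \<alpha> = gsp hom es \<beta>" "j \<le> length es"
  shows "\<alpha> j = \<beta> j"
proof -
  have "gsp hom es (\<lambda>k. \<alpha> k - \<beta> k) = 0" using assms(2) gsp_diff by (metis right_minus_eq)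
  with assms(1,3) show ?thesis unfolding indep_def by force
qed

end

definition ents :: "'c mat \<Rightarrow> 'c set" where
  "ents M = (\<lambda>(r,c). M $$ (r,c)) ` ({..<dim_row M} \<times> {..<dim_col M})"

lemma finite_ents: "finite (ents M)" unfolding ents_def by auto

lemma entsI: "r < dim_row M \<Longrightarrow> c < dim_col M \<Longrightarrow> M $$ (r,c) \<in> ents M"
  unfolding ents_def by auto

lemma pt_self: assumes "\<forall>s\<in>ents M. inspan h es s"
  shows "map_mat (\<lambda>s. gsp h es (cf h es s)) M = M"
  by (rule eq_matI) (auto simp: cf_spec assms entsI)

context field_hom begin

lemma lin_pair_pt: assumes "l \<in> Mset ns" "x \<in> Mset ns"
  shows "lin_pair ns (map (map_mat hom) l) (map (map_mat (\<lambda>s. gsp hom t (\<beta> s))) x)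
     = gsp hom t (\<lambda>k. lin_pair ns l (map (map_mat (\<lambda>s. \<beta> s k)) x))"
proof -
  have "lin_pair ns (map (map_mat hom) l) (map (map_mat (\<lambda>s. gsp hom t (\<beta> s))) x)
    = (\<Sum>i<length ns. \<Sum>r<ns ! i. \<Sum>c<ns ! i. gsp hom t (\<lambda>k. l!i $$ (r,c) * \<beta> (x!i $$ (r,c)) k))"
    unfolding lin_pair_def
    apply (intro sum.cong refl)
    subgoal for i r c
      using assms unfolding Mset_def
    proof -
      assume i: "i \<in> {..<length ns}" and r: "r \<in> {..<ns!i}" and c: "c \<in> {..<ns!i}"
      have L: "l!i \<in> carrier_mat (ns!i) (ns!i)" "x!i \<in> carrier_mat (ns!i) (ns!i)" "length l = length ns" "length x = length ns"
        using assms i unfolding Mset_def by auto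
      show ?thesis using L i r c by (simp add: gsp_scale)
    qed
    done
  also have "\<dots> = gsp hom t (\<lambda>k. (\<Sum>i<length ns. \<Sum>r<ns ! i. \<Sum>c<ns ! i. l!i $$ (r,c) * \<beta> (x!i $$ (r,c)) k))"
    by (simp add: gsp_sum)
  also have "\<dots> = gsp hom t (\<lambda>k. lin_pair ns l (map (map_mat (\<lambda>s. \<beta> s k)) x))"
    unfolding lin_pair_def
    apply (rule arg_cong[where f = "gsp hom t"], rule ext)
    apply (intro sum.cong refl)
    subgoal for k i r c
      using assms unfolding Mset_def
      apply (subgoal_tac "x!i \<in> carrier_mat (ns!i) (ns!i)")
      by auto
    done
  finally show ?thesis .
qed

lemma mult_right_pt: assumes "P \<in> carrier_mat n n" "X \<in> carrier_mat n n" "r < n" "c < n"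
  shows "(map_mat (\<lambda>s. gsp hom t (\<beta> s)) P * map_mat hom X) $$ (r,c)
     = gsp hom t (\<lambda>k. (map_mat (\<lambda>s. \<beta> s k) P * X) $$ (r,c))"
proof -
  have "(map_mat (\<lambda>s. gsp hom t (\<beta> s)) P * map_mat hom X) $$ (r,c)
      = (\<Sum>j<n. gsp hom t (\<lambda>k. X $$ (j,c) * \<beta> (P $$ (r,j)) k))"
    using assms by (auto simp: scalar_prod_def lessThan_atLeast0 gsp_scale[symmetric] intro!: sum.cong)
  also have "\<dots> = gsp hom t (\<lambda>k. (\<Sum>j<n. X $$ (j,c) * \<beta> (P $$ (r,j)) k))" by (simp add: gsp_sum)
  also have "\<dots> = gsp hom t (\<lambda>k. (map_mat (\<lambda>s. \<beta> s k) P * X) $$ (r,c))"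
    using assms by (auto simp: scalar_prod_def lessThan_atLeast0 mult.commute intro!: sum.cong arg_cong[where f = "gsp hom t"])
  finally show ?thesis .
qed

lemma mult_left_pt: assumes "Q \<in> carrier_mat n n" "Y \<in> carrier_mat n n" "r < n" "c < n"
  shows "(map_mat hom Y * map_mat (\<lambda>s. gsp hom t (\<beta> s)) Q) $$ (r,c)
     = gsp hom t (\<lambda>k. (Y * map_mat (\<lambda>s. \<beta> s k) Q) $$ (r,c))"
proof -
  have "(map_mat hom Y * map_mat (\<lambda>s. gsp hom t (\<beta> s)) Q) $$ (r,c)
      = (\<Sum>j<n. gsp hom t (\<lambda>k. Y $$ (r,j) * \<beta> (Q $$ (j,c)) k))"
    using assms by (auto simp: scalar_prod_def lessThan_atLeast0 gsp_scale[symmetric] intro!: sum.cong)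
  also have "\<dots> = gsp hom t (\<lambda>k. (\<Sum>j<n. Y $$ (r,j) * \<beta> (Q $$ (j,c)) k))" by (simp add: gsp_sum)
  also have "\<dots> = gsp hom t (\<lambda>k. (Y * map_mat (\<lambda>s. \<beta> s k) Q) $$ (r,c))"
    using assms by (auto simp: scalar_prod_def lessThan_atLeast0 intro!: sum.cong arg_cong[where f = "gsp hom t"])
  finally show ?thesis .
qed

lemma mult_vec_pt: assumes "P \<in> carrier_mat n n" "v \<in> carrier_vec n" "r < n"
  shows "(map_mat (\<lambda>s. gsp hom t (\<beta> s)) P *\<^sub>v map_vec hom v) $ r
     = gsp hom t (\<lambda>k. (map_mat (\<lambda>s. \<beta> s k) P *\<^sub>v v) $ r)"
proof -
  have "(map_mat (\<lambda>s. gsp hom t (\<beta> s)) P *\<^sub>v map_vec hom v) $ r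
      = (\<Sum>j<n. gsp hom t (\<lambda>k. v $ j * \<beta> (P $$ (r,j)) k))"
    using assms by (auto simp: scalar_prod_def lessThan_atLeast0 gsp_scale[symmetric] intro!: sum.cong)
  also have "\<dots> = gsp hom t (\<lambda>k. (\<Sum>j<n. v $ j * \<beta> (P $$ (r,j)) k))" by (simp add: gsp_sum)
  also have "\<dots> = gsp hom t (\<lambda>k. (map_mat (\<lambda>s. \<beta> s k) P *\<^sub>v v) $ r)"
    using assms by (auto simp: scalar_prod_def lessThan_atLeast0 mult.commute intro!: sum.cong arg_cong[where f = "gsp hom t"])
  finally show ?thesis .
qed

end

lemma map_mat_comp: "map_mat f (map_mat g A) = map_mat (f \<circ> g) A"
  by (rule eq_matI) auto

lemma poly_comm_ring_hom: "comm_ring_hom (\<lambda>p. poly p (z::'a::field))" by (unfold_locales, auto)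

context field_hom begin

lemma det_step:
  assumes inf: "infinite (UNIV::'a set)"
    and p: "p \<in> Mset ns" and spn: "\<forall>i<length ns. \<forall>s\<in>ents (p!i). inspan hom es s"
    and d: "\<forall>i<length ns. det (p!i) \<noteq> 0"
  shows "\<exists>rs. length rs = length es \<and> (\<forall>i<length ns. det (map_mat (\<lambda>s. gsp id rs (cf hom es s)) (p!i)) \<noteq> 0)"
proof -
  define m where "m = length es"
  define D where "D t i = det (map_mat (\<lambda>s. gsp hom t (cf hom es s)) (p!i))" for t i
  have claim: "\<exists>t. length t = m \<and> (\<forall>j<k. t!j \<in> range hom) \<and> (\<forall>j. k \<le> j \<and> j < m \<longrightarrow> t!j = es!j)
      \<and> (\<forall>i<length ns. D t i \<noteq> 0)" if "k \<le> m" for k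
    using that
  proof (induction k)
    case 0
    have "\<forall>i<length ns. D es i \<noteq> 0" unfolding D_def using spn d by (simp add: pt_self)
    thus ?case by (intro exI[of _ es]) (auto simp: m_def)
  next
    case (Suc k)
    then obtain t where t: "length t = m" "\<forall>j<k. t!j \<in> range hom" "\<forall>j. k \<le> j \<and> j < m \<longrightarrow> t!j = es!j"
      "\<forall>i<length ns. D t i \<noteq> 0" by auto
    have k: "k < m" using Suc by auto
    define Mp where "Mp i = map_mat (\<lambda>s. [: gsp hom (t[k:=0]) (cf hom es s), hom (cf hom es s (Suc k)) :]) (p!i)" for i
    define Q where "Q = (\<Prod>i<length ns. det (Mp i))"
    have pv: "poly (det (Mp i)) z = D (t[k:=z]) i" for i z
    proof -
      interpret ph: comm_ring_hom "\<lambda>q. poly q z" by (rule poly_comm_ring_hom)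
      have "poly (det (Mp i)) z = det (map_mat (\<lambda>q. poly q z) (Mp i))" by simp
      also have "map_mat (\<lambda>q. poly q z) (Mp i) = map_mat (\<lambda>s. gsp hom (t[k:=z]) (cf hom es s)) (p!i)"
        unfolding Mp_def using gsp_upd[of k "t" z] k t(1)
        by (intro eq_matI) (auto simp: algebra_simps)
      finally show ?thesis unfolding D_def .
    qed
    have "poly Q (t!k) = (\<Prod>i<length ns. D t i)" unfolding Q_def poly_prod pv by simp
    also have "\<dots> \<noteq> 0" using t(4) by simp
    finally have Q0: "Q \<noteq> 0" by auto
    have "finite {z. poly Q z = 0}" using poly_roots_finite[OF Q0] .
    moreover have "infinite (range hom)"
    proof
      assume "finite (range hom)"
      hence "finite (UNIV :: 'a set)" using finite_imageD inj_f by blast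
      thus False using inf by simp
    qed
    ultimately have "infinite (range hom - {z. poly Q z = 0})" using Diff_infinite_finite by blast
    then obtain z where "z \<in> range hom - {z. poly Q z = 0}" by (metis ex_in_conv finite.emptyI)
    hence z: "z \<in> range hom" "poly Q z \<noteq> 0" by auto
    have "\<forall>i<length ns. D (t[k:=z]) i \<noteq> 0"
      using z(2) unfolding Q_def poly_prod pv by simp
    moreover have "\<forall>j<Suc k. t[k:=z]!j \<in> range hom" using t(1,2) z(1) k by (auto simp: nth_list_update less_Suc_eq)
    moreover have "\<forall>j. Suc k \<le> j \<and> j < m \<longrightarrow> t[k:=z]!j = es!j" using t(3) by auto
    ultimately show ?case using t(1) by (intro exI[of _ "t[k:=z]"]) auto
  qed
  from claim[of m] obtain t where t: "length t = m" "\<forall>j<m. t!j \<in> range hom" "\<forall>i<length ns. D t i \<noteq> 0"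
    by auto
  define rs where "rs = map (inv_into UNIV hom) t"
  have trs: "t = map hom rs" unfolding rs_def using t(1,2)
    by (intro nth_equalityI) (auto simp: f_inv_into_f)
  show ?thesis
  proof (intro exI[of _ rs] conjI allI impI)
    show "length rs = length es" using t(1) m_def rs_def by simp
    fix i assume i: "i < length ns"
    have "D t i = det (map_mat hom (map_mat (\<lambda>s. gsp id rs (cf hom es s)) (p!i)))"
      unfolding D_def trs by (simp add: gsp_map map_mat_comp o_def)
    also have "\<dots> = hom (det (map_mat (\<lambda>s. gsp id rs (cf hom es s)) (p!i)))" by simp
    finally show "det (map_mat (\<lambda>s. gsp id rs (cf hom es s)) (p!i)) \<noteq> 0" using t(3) i by auto
  qed
qed

end


lemma gsp_cong: "(\<And>k. k \<le> length t \<Longrightarrow> \<alpha> k = \<beta> k) \<Longrightarrow> gsp h t \<alpha> = gsp h t \<beta>"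
  unfolding gsp_def by (auto intro!: sum.cong)

lemma map_mat_id': "map_mat id A = A" by (rule eq_matI) auto
lemma map_mat_id_fun: "map_mat id = id" by (rule ext) (simp add: map_mat_id')
lemma map_vec_id': "map_vec id v = v" by (rule eq_vecI) auto

lemma vec_comb_in:
  assumes S: "is_subspace n S" and I: "finite I" and w: "\<forall>k\<in>I. w k \<in> S"
  shows "vec n (\<lambda>r. \<Sum>k\<in>I. c k * w k $ r) \<in> S"
  using I w
proof (induction I rule: finite_induct)
  case empty
  have "vec n (\<lambda>r. \<Sum>k\<in>{}. c k * w k $ r) = 0\<^sub>v n" by (rule eq_vecI) auto
  thus ?case using S unfolding is_subspace_def by simp
next
  case (insert a I)
  have wa: "w a \<in> carrier_vec n" using insert S unfolding is_subspace_def by auto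
  have "vec n (\<lambda>r. \<Sum>k\<in>insert a I. c k * w k $ r) = c a \<cdot>\<^sub>v w a + vec n (\<lambda>r. \<Sum>k\<in>I. c k * w k $ r)"
    using insert wa by (intro eq_vecI) auto
  moreover have "c a \<cdot>\<^sub>v w a \<in> S" using insert S unfolding is_subspace_def by auto
  moreover have "vec n (\<lambda>r. \<Sum>k\<in>I. c k * w k $ r) \<in> S" using insert by auto
  ultimately show ?case using S unfolding is_subspace_def by auto
qed

definition Kspan :: "('a::field \<Rightarrow> 'b::field) \<Rightarrow> nat \<Rightarrow> 'a vec set \<Rightarrow> 'b vec set" where
  "Kspan h n S = {v \<in> carrier_vec n. \<exists>ks ts. length ks = length ts \<and> set ts \<subseteq> S
     \<and> (\<forall>r<n. v $ r = (\<Sum>l<length ts. ks!l * h (ts!l $ r)))}"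

context field_hom begin


lemma lin_transfer:
  assumes es: "indep hom es" and x: "x \<in> Mset ns" and spn: "\<forall>i<length ns. \<forall>s\<in>ents (x!i). inspan hom es s"
    and l: "l \<in> Mset ns" and e: "lin_pair ns (map (map_mat hom) l) x = hom c" and rs: "length rs = length es"
  shows "lin_pair ns l (map (map_mat (\<lambda>s. gsp id rs (cf hom es s))) x) = c"
proof -
  interpret idh: field_hom id by (rule field_hom_id)
  define \<Lambda> where "\<Lambda> k = lin_pair ns l (map (map_mat (\<lambda>s. cf hom es s k)) x)" for k
  have "x = map (map_mat (\<lambda>s. gsp hom es (cf hom es s))) x"
    using x spn unfolding Mset_def by (intro nth_equalityI) (auto simp: pt_self)
  hence "gsp hom es \<Lambda> = hom c" using e lin_pair_pt[OF l x, of es "cf hom es"] unfolding \<Lambda>_def by simp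
  also have "\<dots> = gsp hom es (\<lambda>k. if k = 0 then c else 0)" by (simp add: gsp_const)
  finally have u: "\<And>k. k \<le> length es \<Longrightarrow> \<Lambda> k = (if k = 0 then c else 0)" using unique[OF es] by blast
  have "lin_pair ns l (map (map_mat (\<lambda>s. gsp id rs (cf hom es s))) x)
     = lin_pair ns (map (map_mat id) l) (map (map_mat (\<lambda>s. gsp id rs (cf hom es s))) x)"
    by (simp add: map_mat_id_fun)
  also have "\<dots> = gsp id rs \<Lambda>" unfolding \<Lambda>_def by (rule idh.lin_pair_pt[OF l x])
  also have "\<dots> = gsp id rs (\<lambda>k. if k = 0 then c else 0)" using u rs by (intro gsp_cong) auto
  also have "\<dots> = c" by (simp add: idh.gsp_const)
  finally show ?thesis .
qed

lemma prod_transfer: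
  assumes es: "indep hom es" and P: "P \<in> carrier_mat n n" and Q: "Q \<in> carrier_mat n n"
    and X: "X \<in> carrier_mat n n" and Y: "Y \<in> carrier_mat n n"
    and spn: "\<forall>s\<in>ents P \<union> ents Q. inspan hom es s" and rs: "length rs = length es"
    and e: "P * map_mat hom X = map_mat hom Y * Q"
  shows "map_mat (\<lambda>s. gsp id rs (cf hom es s)) P * X = Y * map_mat (\<lambda>s. gsp id rs (cf hom es s)) Q"
proof (rule eq_matI)
  interpret idh: field_hom id by (rule field_hom_id)
  fix r c assume r: "r < dim_row (Y * map_mat (\<lambda>s. gsp id rs (cf hom es s)) Q)"
    and c: "c < dim_col (Y * map_mat (\<lambda>s. gsp id rs (cf hom es s)) Q)"
  hence r: "r < n" and c: "c < n" using Y Q by auto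
  have Pe: "P = map_mat (\<lambda>s. gsp hom es (cf hom es s)) P" using spn by (simp add: pt_self)
  have Qe: "Q = map_mat (\<lambda>s. gsp hom es (cf hom es s)) Q" using spn by (simp add: pt_self)
  have "gsp hom es (\<lambda>k. (map_mat (\<lambda>s. cf hom es s k) P * X) $$ (r,c))
     = (P * map_mat hom X) $$ (r,c)" using mult_right_pt[OF P X r c, of es "cf hom es"] Pe by simp
  also have "\<dots> = (map_mat hom Y * Q) $$ (r,c)" using e by simp
  also have "\<dots> = gsp hom es (\<lambda>k. (Y * map_mat (\<lambda>s. cf hom es s k) Q) $$ (r,c))"
    using mult_left_pt[OF Q Y r c, of es "cf hom es"] Qe by simp
  finally have u: "\<And>k. k \<le> length es \<Longrightarrow> (map_mat (\<lambda>s. cf hom es s k) P * X) $$ (r,c) = (Y * map_mat (\<lambda>s. cf hom es s k) Q) $$ (r,c)"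
    using unique[OF es] by blast
  have "(map_mat (\<lambda>s. gsp id rs (cf hom es s)) P * X) $$ (r,c)
     = (map_mat (\<lambda>s. gsp id rs (cf hom es s)) P * map_mat id X) $$ (r,c)" by (simp add: map_mat_id')
  also have "\<dots> = gsp id rs (\<lambda>k. (map_mat (\<lambda>s. cf hom es s k) P * X) $$ (r,c))"
    by (rule idh.mult_right_pt[OF P X r c])
  also have "\<dots> = gsp id rs (\<lambda>k. (Y * map_mat (\<lambda>s. cf hom es s k) Q) $$ (r,c))"
    using u rs by (intro gsp_cong) auto
  also have "\<dots> = (map_mat id Y * map_mat (\<lambda>s. gsp id rs (cf hom es s)) Q) $$ (r,c)"
    by (rule idh.mult_left_pt[OF Q Y r c, symmetric])
  finally show "(map_mat (\<lambda>s. gsp id rs (cf hom es s)) P * X) $$ (r,c) = (Y * map_mat (\<lambda>s. gsp id rs (cf hom es s)) Q) $$ (r,c)"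
    by (simp add: map_mat_id')
qed (insert P Q X Y, auto)


lemma gsp_id_sum: "gsp id rs \<alpha> = (\<Sum>k\<le>length rs. (if k = 0 then 1 else rs!(k-1)) * \<alpha> k)"
  unfolding gsp_def by (simp add: sum.atMost_shift)

lemma stab_transfer:
  assumes es: "indep hom es" and P: "P \<in> carrier_mat n n" and spn: "\<forall>s\<in>ents P. inspan hom es s"
    and rs: "length rs = length es" and S: "is_subspace n S"
    and st: "\<forall>v\<in>S. P *\<^sub>v map_vec hom v \<in> Kspan hom n S" and v: "v \<in> S"
  shows "map_mat (\<lambda>s. gsp id rs (cf hom es s)) P *\<^sub>v v \<in> S"
proof -
  interpret idh: field_hom id by (rule field_hom_id)
  define U where "U k = map_mat (\<lambda>s. cf hom es s k) P" for k
  have vc: "v \<in> carrier_vec n" using S v unfolding is_subspace_def by auto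
  have Pe: "P = map_mat (\<lambda>s. gsp hom es (cf hom es s)) P" using spn by (simp add: pt_self)
  let ?w = "P *\<^sub>v map_vec hom v"
  obtain ks ts where kt: "length ks = length ts" "set ts \<subseteq> S"
    "\<forall>r<n. ?w $ r = (\<Sum>l<length ts. ks!l * hom (ts!l $ r))"
    using st v unfolding Kspan_def by blast
  obtain fs where fs: "indep hom (es @ fs)" "\<forall>s\<in>set ks. inspan hom (es @ fs) s"
    using extend[OF _ es, of "set ks"] by auto
  define es' where "es' = es @ fs"
  have step1: "U k *\<^sub>v v \<in> S" if k: "k \<le> length es" for k
  proof -
    have eqv: "U k *\<^sub>v v = vec n (\<lambda>r. \<Sum>l\<in>{..<length ts}. cf hom es' (ks!l) k * ts!l $ r)"
    proof (rule eq_vecI)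
      fix r assume "r < dim_vec (vec n (\<lambda>r. \<Sum>l\<in>{..<length ts}. cf hom es' (ks!l) k * ts!l $ r))"
      hence r: "r < n" by simp
      have "gsp hom es' (\<lambda>k. if k \<le> length es then (U k *\<^sub>v v) $ r else 0)
          = gsp hom es (\<lambda>k. (U k *\<^sub>v v) $ r)" unfolding es'_def by (rule gsp_pad)
      also have "\<dots> = ?w $ r" using mult_vec_pt[OF P vc r, of es "cf hom es"] Pe unfolding U_def by simp
      also have "\<dots> = (\<Sum>l<length ts. gsp hom es' (cf hom es' (ks!l)) * hom (ts!l $ r))"
        using kt(3) r fs(2) kt(1) unfolding es'_def by (auto simp: cf_spec intro!: sum.cong)
      also have "\<dots> = (\<Sum>l<length ts. gsp hom es' (\<lambda>k. ts!l $ r * cf hom es' (ks!l) k))"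
        by (simp add: gsp_scale[symmetric] mult.commute)
      also have "\<dots> = gsp hom es' (\<lambda>k. \<Sum>l<length ts. ts!l $ r * cf hom es' (ks!l) k)"
        by (rule gsp_sum)
      finally have E: "gsp hom es' (\<lambda>k. if k \<le> length es then (U k *\<^sub>v v) $ r else 0)
         = gsp hom es' (\<lambda>k. \<Sum>l<length ts. ts!l $ r * cf hom es' (ks!l) k)" .
      have "(\<lambda>k. if k \<le> length es then (U k *\<^sub>v v) $ r else 0) k = (\<lambda>k. \<Sum>l<length ts. ts!l $ r * cf hom es' (ks!l) k) k"
        by (rule unique[OF fs(1)[folded es'_def] E]) (use k in \<open>simp add: es'_def\<close>)
      hence "(if k \<le> length es then (U k *\<^sub>v v) $ r else 0) = (\<Sum>l<length ts. ts!l $ r * cf hom es' (ks!l) k)" by simp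
      thus "(U k *\<^sub>v v) $ r = vec n (\<lambda>r. \<Sum>l\<in>{..<length ts}. cf hom es' (ks!l) k * ts!l $ r) $ r"
        using k r by (simp add: mult.commute)
    qed (use P in \<open>simp add: U_def\<close>)
    show ?thesis unfolding eqv using kt(2) by (intro vec_comb_in[OF S]) auto
  qed
  have "map_mat (\<lambda>s. gsp id rs (cf hom es s)) P *\<^sub>v v
      = vec n (\<lambda>r. \<Sum>k\<in>{..length es}. (if k = 0 then 1 else rs!(k-1)) * (U k *\<^sub>v v) $ r)"
  proof (rule eq_vecI)
    fix r assume "r < dim_vec (vec n (\<lambda>r. \<Sum>k\<in>{..length es}. (if k = 0 then 1 else rs!(k-1)) * (U k *\<^sub>v v) $ r))"
    hence r: "r < n" by simp
    have "(map_mat (\<lambda>s. gsp id rs (cf hom es s)) P *\<^sub>v v) $ r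
       = (map_mat (\<lambda>s. gsp id rs (cf hom es s)) P *\<^sub>v map_vec id v) $ r" by (simp add: map_vec_id')
    also have "\<dots> = gsp id rs (\<lambda>k. (U k *\<^sub>v v) $ r)" unfolding U_def by (rule idh.mult_vec_pt[OF P vc r])
    also have "\<dots> = (\<Sum>k\<in>{..length es}. (if k = 0 then 1 else rs!(k-1)) * (U k *\<^sub>v v) $ r)"
      by (simp add: gsp_id_sum rs)
    finally show "(map_mat (\<lambda>s. gsp id rs (cf hom es s)) P *\<^sub>v v) $ r
      = vec n (\<lambda>r. \<Sum>k\<in>{..length es}. (if k = 0 then 1 else rs!(k-1)) * (U k *\<^sub>v v) $ r) $ r"
      using r by simp
  qed (use P in simp)
  also have "\<dots> \<in> S" using step1 by (intro vec_comb_in[OF S]) auto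
  finally show ?thesis .
qed

lemma core:
  assumes inf: "infinite (UNIV::'a set)"
    and p: "p \<in> Mset ns" and q: "q \<in> Mset ns" and X: "X \<in> Mset ns" and Y: "Y \<in> Mset ns"
    and dp: "\<forall>i<length ns. det (p!i) \<noteq> 0"
    and eq: "\<forall>i<length ns. p!i * map_mat hom (X!i) = map_mat hom (Y!i) * q!i"
  shows "\<exists>p0 q0. p0 \<in> Mset ns \<and> q0 \<in> Mset ns \<and> (\<forall>i<length ns. det (p0!i) \<noteq> 0)
    \<and> (\<forall>i<length ns. p0!i * X!i = Y!i * q0!i)
    \<and> (\<forall>l c. l \<in> Mset ns \<longrightarrow> lin_pair ns (map (map_mat hom) l) p = hom c \<longrightarrow> lin_pair ns l p0 = c)
    \<and> (\<forall>l c. l \<in> Mset ns \<longrightarrow> lin_pair ns (map (map_mat hom) l) q = hom c \<longrightarrow> lin_pair ns l q0 = c)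
    \<and> (\<forall>i<length ns. \<forall>S. is_subspace (ns!i) S \<longrightarrow> (\<forall>v\<in>S. p!i *\<^sub>v map_vec hom v \<in> Kspan hom (ns!i) S)
         \<longrightarrow> (\<forall>v\<in>S. p0!i *\<^sub>v v \<in> S))"
proof -
  define T where "T = (\<Union>i<length ns. ents (p!i) \<union> ents (q!i))"
  have "finite T" unfolding T_def by (auto simp: finite_ents)
  from extend[OF this indep_nil] obtain es where es: "indep hom es" "\<forall>s\<in>T. inspan hom es s" by auto
  have spp: "\<forall>i<length ns. \<forall>s\<in>ents (p!i). inspan hom es s" using es(2) unfolding T_def by auto
  have spq: "\<forall>i<length ns. \<forall>s\<in>ents (q!i). inspan hom es s" using es(2) unfolding T_def by auto
  obtain rs where rs: "length rs = length es"
    "\<forall>i<length ns. det (map_mat (\<lambda>s. gsp id rs (cf hom es s)) (p!i)) \<noteq> 0"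
    using det_step[OF inf p spp dp] by auto
  define p0 where "p0 = map (map_mat (\<lambda>s. gsp id rs (cf hom es s))) p"
  define q0 where "q0 = map (map_mat (\<lambda>s. gsp id rs (cf hom es s))) q"
  have lp: "length p = length ns" and lq: "length q = length ns" using p q unfolding Mset_def by auto
  have pc: "\<And>i. i < length ns \<Longrightarrow> p!i \<in> carrier_mat (ns!i) (ns!i)" using p unfolding Mset_def by auto
  have qc: "\<And>i. i < length ns \<Longrightarrow> q!i \<in> carrier_mat (ns!i) (ns!i)" using q unfolding Mset_def by auto
  have Xc: "\<And>i. i < length ns \<Longrightarrow> X!i \<in> carrier_mat (ns!i) (ns!i)" using X unfolding Mset_def by auto
  have Yc: "\<And>i. i < length ns \<Longrightarrow> Y!i \<in> carrier_mat (ns!i) (ns!i)" using Y unfolding Mset_def by auto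
  show ?thesis
  proof (rule exI[of _ p0], rule exI[of _ q0], intro conjI allI impI)
    show "p0 \<in> Mset ns" unfolding p0_def Mset_def using lp pc by auto
    show "q0 \<in> Mset ns" unfolding q0_def Mset_def using lq qc by auto
    fix i assume i: "i < length ns"
    show "det (p0!i) \<noteq> 0" unfolding p0_def using rs(2) i lp by simp
    have sp2: "\<forall>s\<in>ents (p!i) \<union> ents (q!i). inspan hom es s" using spp spq i by blast
    show "p0!i * X!i = Y!i * q0!i" unfolding p0_def q0_def using i lp lq
      prod_transfer[OF es(1) pc[OF i] qc[OF i] Xc[OF i] Yc[OF i] sp2 rs(1)] eq by simp
  next
    fix l c assume "l \<in> Mset ns" "lin_pair ns (map (map_mat hom) l) p = hom c"
    thus "lin_pair ns l p0 = c" unfolding p0_def using lin_transfer[OF es(1) p spp _ _ rs(1)] by blast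
  next
    fix l c assume "l \<in> Mset ns" "lin_pair ns (map (map_mat hom) l) q = hom c"
    thus "lin_pair ns l q0 = c" unfolding q0_def using lin_transfer[OF es(1) q spq _ _ rs(1)] by blast
  next
    fix i S assume i: "i < length ns" and S: "is_subspace (ns!i) S"
      and st: "\<forall>v\<in>S. p!i *\<^sub>v map_vec hom v \<in> Kspan hom (ns!i) S"
    have sp1: "\<forall>s\<in>ents (p!i). inspan hom es s" using spp i by blast
    show "\<forall>v\<in>S. p0!i *\<^sub>v v \<in> S" unfolding p0_def using i lp
      stab_transfer[OF es(1) pc[OF i] sp1 rs(1) S st] by simp
  qed
qed
end


lemma Mset_nth: "x \<in> Mset ns \<Longrightarrow> i < length ns \<Longrightarrow> x!i \<in> carrier_mat (ns!i) (ns!i)"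
  unfolding Mset_def by auto
lemma Mset_len: "x \<in> Mset ns \<Longrightarrow> length x = length ns"
  unfolding Mset_def by auto
lemma MsetI: "length x = length ns \<Longrightarrow> (\<And>i. i < length ns \<Longrightarrow> x!i \<in> carrier_mat (ns!i) (ns!i)) \<Longrightarrow> x \<in> Mset ns"
  unfolding Mset_def by auto

lemma mmul_len: "length (mmul x y) = min (length x) (length y)" unfolding mmul_def by simp
lemma mmul_nth: "i < length x \<Longrightarrow> i < length y \<Longrightarrow> mmul x y ! i = x!i * y!i" unfolding mmul_def by simp

lemma mmul_Mset: assumes "x \<in> Mset ns" "y \<in> Mset ns" shows "mmul x y \<in> Mset ns"
proof (intro MsetI)
  show "length (mmul x y) = length ns" using assms by (simp add: mmul_len Mset_len)
  fix i assume i: "i < length ns"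
  with Mset_nth[OF assms(1) i] Mset_nth[OF assms(2) i] show "mmul x y ! i \<in> carrier_mat (ns!i) (ns!i)"
    using assms by (simp add: mmul_nth Mset_len)
qed

lemma mmul_eqI: assumes "x \<in> Mset ns" "y \<in> Mset ns" "\<And>i. i < length ns \<Longrightarrow> x!i = y!i" shows "x = y"
  using assms by (intro nth_equalityI) (auto simp: Mset_len)

lemma mone_Mset: "mone ns \<in> Mset ns" unfolding mone_def by (intro MsetI) auto
lemma mone_nth: "i < length ns \<Longrightarrow> mone ns ! i = 1\<^sub>m (ns!i)" unfolding mone_def by simp

lemma mmul_assoc: assumes "x \<in> Mset ns" "y \<in> Mset ns" "z \<in> Mset ns" shows "mmul (mmul x y) z = mmul x (mmul y z)"
proof (rule mmul_eqI[of _ ns])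
  show "mmul (mmul x y) z \<in> Mset ns" "mmul x (mmul y z) \<in> Mset ns" using assms by (auto intro!: mmul_Mset)
  fix i assume i: "i < length ns"
  with Mset_nth[OF assms(1) i] Mset_nth[OF assms(2) i] Mset_nth[OF assms(3) i]
  show "mmul (mmul x y) z ! i = mmul x (mmul y z) ! i"
    using assms by (simp add: mmul_nth Mset_len mmul_len)
qed

lemma mone_len: "length (mone ns) = length ns" unfolding mone_def by simp

lemma mmul_one_left: assumes "x \<in> Mset ns" shows "mmul (mone ns) x = x"
proof (rule mmul_eqI[of _ ns])
  show "mmul (mone ns) x \<in> Mset ns" using assms by (auto intro!: mmul_Mset mone_Mset)
  fix i assume i: "i < length ns"
  with Mset_nth[OF assms(1) i] show "mmul (mone ns) x ! i = x ! i"
    using assms by (simp add: mmul_nth Mset_len mone_len mone_nth)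
qed (rule assms)
lemma mmul_one_right: assumes "x \<in> Mset ns" shows "mmul x (mone ns) = x"
proof (rule mmul_eqI[of _ ns])
  show "mmul x (mone ns) \<in> Mset ns" using assms by (auto intro!: mmul_Mset mone_Mset)
  fix i assume i: "i < length ns"
  with Mset_nth[OF assms(1) i] show "mmul x (mone ns) ! i = x ! i"
    using assms by (simp add: mmul_nth Mset_len mone_len mone_nth)
qed (rule assms)

lemma invertible_det: assumes A: "A \<in> carrier_mat n n"
  shows "invertible_mat (A :: 'a :: field mat) \<longleftrightarrow> det A \<noteq> 0"
proof
  assume "invertible_mat A"
  then obtain B where AB: "A * B = 1\<^sub>m n" and BA: "B * A = 1\<^sub>m (dim_row B)"
    using A unfolding invertible_mat_def inverts_mat_def by auto
  have "dim_col B = n" using AB by (metis index_mult_mat(3) index_one_mat(3))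
  moreover have "dim_row B = n" using BA A by (metis carrier_matD(2) index_mult_mat(3) index_one_mat(3))
  ultimately have B: "B \<in> carrier_mat n n" by auto
  from arg_cong[OF AB, of det] det_mult[OF A B] show "det A \<noteq> 0" by auto
next
  assume "det A \<noteq> 0"
  from det_non_zero_imp_unit[OF A this, of undefined]
  obtain B where B: "B \<in> carrier_mat n n" "A * B = 1\<^sub>m n" "B * A = 1\<^sub>m n"
    unfolding Units_def ring_mat_def by auto
  thus "invertible_mat A" using A unfolding invertible_mat_def inverts_mat_def by auto
qed

lemma Gset_iff: "x \<in> Gset ns \<longleftrightarrow> x \<in> Mset ns \<and> (\<forall>i<length ns. det (x!i) \<noteq> 0)"
  unfolding Gset_def using invertible_det Mset_nth by blast

lemma inverse_ex: assumes A: "A \<in> carrier_mat n n" "det (A :: 'a :: field mat) \<noteq> 0"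
  shows "\<exists>B. B \<in> carrier_mat n n \<and> A * B = 1\<^sub>m n \<and> B * A = 1\<^sub>m n"
  using det_non_zero_imp_unit[OF A, of undefined] unfolding Units_def ring_mat_def by auto

context field_hom begin

lemma map_Mset: "x \<in> Mset ns \<Longrightarrow> map (map_mat hom) x \<in> Mset ns"
  by (intro MsetI) (auto simp: Mset_len dest: Mset_nth)

lemma map_Mset_iff: "map (map_mat hom) x \<in> Mset ns \<longleftrightarrow> x \<in> Mset ns"
  unfolding Mset_def by auto

lemma map_mmul: assumes "x \<in> Mset ns" "y \<in> Mset ns"
  shows "map (map_mat hom) (mmul x y) = mmul (map (map_mat hom) x) (map (map_mat hom) y)"
proof (rule mmul_eqI[of _ ns])
  show "map (map_mat hom) (mmul x y) \<in> Mset ns" "mmul (map (map_mat hom) x) (map (map_mat hom) y) \<in> Mset ns"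
    using assms by (auto intro!: mmul_Mset map_Mset)
  fix i assume i: "i < length ns"
  with Mset_nth[OF assms(1) i] Mset_nth[OF assms(2) i]
  show "map (map_mat hom) (mmul x y) ! i = mmul (map (map_mat hom) x) (map (map_mat hom) y) ! i"
    using assms by (simp add: mmul_nth Mset_len mmul_len mat_hom_mult)
qed

lemma map_mone: "map (map_mat hom) (mone ns) = mone ns"
  unfolding mone_def by (simp add: mat_hom_one)

lemma lin_pair_hom: assumes "l \<in> Mset ns" "x \<in> Mset ns"
  shows "lin_pair ns (map (map_mat hom) l) (map (map_mat hom) x) = hom (lin_pair ns l x)"
  unfolding lin_pair_def hom_sum hom_mult
proof (intro sum.cong refl)
  fix i r c assume i: "i \<in> {..<length ns}" and r: "r \<in> {..<ns!i}" and c: "c \<in> {..<ns!i}"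
  have L: "l!i \<in> carrier_mat (ns!i) (ns!i)" "x!i \<in> carrier_mat (ns!i) (ns!i)"
    using Mset_nth[OF assms(1)] Mset_nth[OF assms(2)] i by auto
  show "map (map_mat hom) l ! i $$ (r, c) * map (map_mat hom) x ! i $$ (r, c) = hom (l ! i $$ (r, c)) * hom (x ! i $$ (r, c))"
    using L r c i Mset_len[OF assms(1)] Mset_len[OF assms(2)] by simp
qed

lemma affine_iff: assumes E: "lin_eqns ns E" and x: "x \<in> Mset ns"
  shows "map (map_mat hom) x \<in> affine_locus hom ns E \<longleftrightarrow> x \<in> affine_locus id ns E"
proof -
  have key: "lin_pair ns (map (map_mat hom) l) (map (map_mat hom) x) = hom c \<longleftrightarrow> lin_pair ns (map (map_mat id) l) x = id c"
    if "(l,c) \<in> E" for l c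
    using E x that unfolding lin_eqns_def by (auto simp: lin_pair_hom map_mat_id_fun)
  show ?thesis unfolding affine_locus_def using x key map_Mset_iff by auto
qed

lemma Gset_map_iff: "map (map_mat hom) x \<in> Gset ns \<longleftrightarrow> x \<in> Gset ns"
  unfolding Gset_iff map_Mset_iff by (auto simp: Mset_len)

lemma subgrp_iff: assumes E: "lin_eqns ns E"
  shows "map (map_mat hom) x \<in> subgrp_pts hom ns E \<longleftrightarrow> x \<in> subgrp_pts id ns E"
proof
  assume a: "map (map_mat hom) x \<in> subgrp_pts hom ns E"
  hence "x \<in> Mset ns" unfolding subgrp_pts_def Gset_def using map_Mset_iff by blast
  thus "x \<in> subgrp_pts id ns E" using a affine_iff[OF E] Gset_map_iff unfolding subgrp_pts_def by blast
next
  assume a: "x \<in> subgrp_pts id ns E"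
  hence "x \<in> Mset ns" unfolding subgrp_pts_def Gset_def by blast
  thus "map (map_mat hom) x \<in> subgrp_pts hom ns E" using a affine_iff[OF E] Gset_map_iff unfolding subgrp_pts_def by blast
qed

lemma subgrp_mult: assumes E: "lin_eqns ns E" and G: "is_subgroup ns (subgrp_pts hom ns E)"
  and u: "u \<in> subgrp_pts id ns E" and w: "w \<in> subgrp_pts id ns E"
  shows "mmul u w \<in> subgrp_pts id ns E"
proof -
  have uM: "u \<in> Mset ns" "w \<in> Mset ns" using u w unfolding subgrp_pts_def Gset_def by auto
  have "map (map_mat hom) u \<in> subgrp_pts hom ns E" "map (map_mat hom) w \<in> subgrp_pts hom ns E"
    using u w subgrp_iff[OF E] by auto
  hence "mmul (map (map_mat hom) u) (map (map_mat hom) w) \<in> subgrp_pts hom ns E"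
    using G unfolding is_subgroup_def by auto
  thus ?thesis using subgrp_iff[OF E] map_mmul[OF uM] by metis
qed

lemma subgrp_inv: assumes E: "lin_eqns ns E" and G: "is_subgroup ns (subgrp_pts hom ns E)"
  and u: "u \<in> subgrp_pts id ns E"
  shows "\<exists>w\<in>subgrp_pts id ns E. mmul u w = mone ns"
proof -
  have uG: "u \<in> Gset ns" using u unfolding subgrp_pts_def by auto
  hence uM: "u \<in> Mset ns" and ud: "\<forall>i<length ns. det (u!i) \<noteq> 0" unfolding Gset_iff by auto
  have "\<forall>i<length ns. \<exists>B. B \<in> carrier_mat (ns!i) (ns!i) \<and> u!i * B = 1\<^sub>m (ns!i) \<and> B * u!i = 1\<^sub>m (ns!i)"
    using inverse_ex Mset_nth[OF uM] ud by blast
  then obtain f where f: "\<And>i. i < length ns \<Longrightarrow> f i \<in> carrier_mat (ns!i) (ns!i) \<and> u!i * f i = 1\<^sub>m (ns!i) \<and> f i * u!i = 1\<^sub>m (ns!i)"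
    by metis
  define w where "w = map f [0..<length ns]"
  have wM: "w \<in> Mset ns" unfolding w_def using f by (intro MsetI) auto
  have uw: "mmul u w = mone ns"
    by (rule mmul_eqI[of _ ns]) (use f uM wM in \<open>auto intro!: mmul_Mset mone_Mset simp: mmul_nth Mset_len mone_nth w_def\<close>)
  have "map (map_mat hom) u \<in> subgrp_pts hom ns E" using u subgrp_iff[OF E] by auto
  then obtain z where z: "z \<in> subgrp_pts hom ns E" "mmul (map (map_mat hom) u) z = mone ns"
    using G unfolding is_subgroup_def by auto
  have zM: "z \<in> Mset ns" using z unfolding subgrp_pts_def Gset_def by auto
  have "z = map (map_mat hom) w"
  proof (rule mmul_eqI[OF zM map_Mset[OF wM]])
    fix i assume i: "i < length ns"
    have c: "u!i \<in> carrier_mat (ns!i) (ns!i)" "w!i \<in> carrier_mat (ns!i) (ns!i)" "z!i \<in> carrier_mat (ns!i) (ns!i)"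
      using uM wM zM i by (auto dest: Mset_nth)
    have zi: "map_mat hom (u!i) * z!i = 1\<^sub>m (ns!i)" using arg_cong[OF z(2), of "\<lambda>l. l!i"] i uM zM
      by (simp add: mmul_nth Mset_len mone_nth)
    have wi: "w!i * u!i = 1\<^sub>m (ns!i)" using f i unfolding w_def by simp
    have wi': "map_mat hom (w!i) * map_mat hom (u!i) = 1\<^sub>m (ns!i)"
      using arg_cong[OF wi, of "map_mat hom"] mat_hom_mult[OF c(2) c(1)] mat_hom_one by simp
    have "z!i = (map_mat hom (w!i) * map_mat hom (u!i)) * z!i" using wi' c by simp
    also have "\<dots> = map_mat hom (w!i) * (map_mat hom (u!i) * z!i)"
      using c by (intro assoc_mult_mat) auto
    also have "\<dots> = map_mat hom (w!i)" using zi c by simp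
    finally show "z!i = map (map_mat hom) w ! i" using i wM by (simp add: Mset_len)
  qed
  hence "w \<in> subgrp_pts id ns E" using z(1) subgrp_iff[OF E] by simp
  thus ?thesis using uw by blast
qed

end


context field_hom begin

lemma subgrp_F_intro: assumes E: "lin_eqns ns E" and M: "p0 \<in> Mset ns" and d: "\<forall>i<length ns. det (p0!i) \<noteq> 0"
  and a: "a \<in> subgrp_pts hom ns E"
  and tr: "\<forall>l c. l \<in> Mset ns \<longrightarrow> lin_pair ns (map (map_mat hom) l) a = hom c \<longrightarrow> lin_pair ns l p0 = c"
  shows "p0 \<in> subgrp_pts id ns E"
proof -
  have "p0 \<in> Gset ns" using M d Gset_iff by blast
  moreover have "p0 \<in> affine_locus id ns E"
    unfolding affine_locus_def
  proof (intro CollectI conjI M ballI)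
    fix lc assume lc: "lc \<in> E"
    obtain l c where lcd: "lc = (l,c)" by force
    have "l \<in> Mset ns" using E lc lcd unfolding lin_eqns_def by auto
    moreover have "lin_pair ns (map (map_mat hom) l) a = hom c" using a lc lcd unfolding subgrp_pts_def affine_locus_def by auto
    ultimately show "case lc of (l, c) \<Rightarrow> lin_pair ns (map (map_mat id) l) p0 = id c"
      using tr lcd by (simp add: map_mat_id_fun)
  qed
  ultimately show ?thesis unfolding subgrp_pts_def by blast
qed

lemma part1:
  assumes inf: "infinite (UNIV::'a set)"
    and EA: "lin_eqns ns EA" and EB: "lin_eqns ns EB"
    and GA: "is_subgroup ns (subgrp_pts hom ns EA)" and GB: "is_subgroup ns (subgrp_pts hom ns EB)"
    and x: "x \<in> Gset ns" and y: "y \<in> Gset ns"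
    and a: "a \<in> subgrp_pts hom ns EA" and b: "b \<in> subgrp_pts hom ns EB"
    and e: "mmul (mmul a (map (map_mat hom) x)) b = map (map_mat hom) y"
  shows "\<exists>a\<in>subgrp_pts id ns EA. \<exists>b\<in>subgrp_pts id ns EB. mmul (mmul a x) b = y"
proof -
  have xM: "x \<in> Mset ns" and yM: "y \<in> Mset ns" and dx: "\<forall>i<length ns. det (x!i) \<noteq> 0"
    using x y Gset_iff by auto
  have aM: "a \<in> Mset ns" and da: "\<forall>i<length ns. det (a!i) \<noteq> 0" and bM: "b \<in> Mset ns"
    using a b Gset_iff unfolding subgrp_pts_def by auto
  obtain b' where b': "b' \<in> subgrp_pts hom ns EB" "mmul b b' = mone ns" using GB b unfolding is_subgroup_def by auto
  have b'M: "b' \<in> Mset ns" using b' unfolding subgrp_pts_def Gset_def by auto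
  let ?X = "map (map_mat hom) x" and ?Y = "map (map_mat hom) y"
  have XM: "?X \<in> Mset ns" "?Y \<in> Mset ns" using xM yM map_Mset by auto
  have "mmul a ?X = mmul (mmul a ?X) (mmul b b')"
    using b'(2) mmul_one_right[OF mmul_Mset[OF aM XM(1)]] by simp
  also have "\<dots> = mmul ?Y b'" using e mmul_assoc[OF mmul_Mset[OF aM XM(1)] bM b'M] by simp
  finally have eq1: "mmul a ?X = mmul ?Y b'" .
  have eqc: "\<forall>i<length ns. a!i * map_mat hom (x!i) = map_mat hom (y!i) * b'!i"
  proof (intro allI impI)
    fix i assume i: "i < length ns"
    from arg_cong[OF eq1, of "\<lambda>l. l!i"] show "a!i * map_mat hom (x!i) = map_mat hom (y!i) * b'!i"
      using i aM xM yM b'M by (simp add: mmul_nth Mset_len)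
  qed
  obtain p0 q0 where pq: "p0 \<in> Mset ns" "q0 \<in> Mset ns" "\<forall>i<length ns. det (p0!i) \<noteq> 0"
    "\<forall>i<length ns. p0!i * x!i = y!i * q0!i"
    "\<forall>l c. l \<in> Mset ns \<longrightarrow> lin_pair ns (map (map_mat hom) l) a = hom c \<longrightarrow> lin_pair ns l p0 = c"
    "\<forall>l c. l \<in> Mset ns \<longrightarrow> lin_pair ns (map (map_mat hom) l) b' = hom c \<longrightarrow> lin_pair ns l q0 = c"
    "\<forall>i<length ns. \<forall>S. is_subspace (ns!i) S \<longrightarrow> (\<forall>v\<in>S. a!i *\<^sub>v map_vec hom v \<in> Kspan hom (ns!i) S)
         \<longrightarrow> (\<forall>v\<in>S. p0!i *\<^sub>v v \<in> S)"
    using core[OF inf aM b'M xM yM da eqc] by (elim exE conjE) blast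
  have dq: "\<forall>i<length ns. det (q0!i) \<noteq> 0"
  proof (intro allI impI)
    fix i assume i: "i < length ns"
    have c: "p0!i \<in> carrier_mat (ns!i) (ns!i)" "q0!i \<in> carrier_mat (ns!i) (ns!i)"
      "x!i \<in> carrier_mat (ns!i) (ns!i)" "y!i \<in> carrier_mat (ns!i) (ns!i)"
      using pq xM yM i Mset_nth by auto
    have "det (p0!i) * det (x!i) = det (y!i) * det (q0!i)"
      using pq(4) i det_mult c by metis
    thus "det (q0!i) \<noteq> 0" using pq(3) dx i by auto
  qed
  have p0A: "p0 \<in> subgrp_pts id ns EA" by (rule subgrp_F_intro[OF EA pq(1) pq(3) a pq(5)])
  have q0B: "q0 \<in> subgrp_pts id ns EB" by (rule subgrp_F_intro[OF EB pq(2) dq b'(1) pq(6)])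
  obtain q1 where q1: "q1 \<in> subgrp_pts id ns EB" "mmul q0 q1 = mone ns" using subgrp_inv[OF EB GB q0B] by auto
  have q1M: "q1 \<in> Mset ns" using q1 unfolding subgrp_pts_def Gset_def by auto
  have eq2: "mmul p0 x = mmul y q0"
    by (rule mmul_eqI[of _ ns]) (use pq xM yM in \<open>auto intro!: mmul_Mset simp: mmul_nth Mset_len\<close>)
  have "mmul (mmul p0 x) q1 = y"
    using eq2 mmul_assoc[OF yM pq(2) q1M] q1(2) mmul_one_right[OF yM] by simp
  thus ?thesis using p0A q1(1) by blast
qed

end


lemma sum_lessThan_add: "(\<Sum>l<m+(k::nat). g l) = (\<Sum>l<m. g l) + (\<Sum>l<k. (g (m+l) :: 'c::comm_monoid_add))"
  by (induction k) (auto simp: add.assoc)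

context field_hom begin

lemma Kspan_subspace: "is_subspace n (Kspan hom n S)"
  unfolding is_subspace_def
proof (intro conjI ballI allI)
  show "Kspan hom n S \<subseteq> carrier_vec n" unfolding Kspan_def by auto
  show "0\<^sub>v n \<in> Kspan hom n S" unfolding Kspan_def
    by (auto intro!: exI[of _ "[]"])
next
  fix u v assume u: "u \<in> Kspan hom n S" and v: "v \<in> Kspan hom n S"
  obtain ks1 ts1 where 1: "u \<in> carrier_vec n" "length ks1 = length ts1" "set ts1 \<subseteq> S"
    "\<forall>r<n. u $ r = (\<Sum>l<length ts1. ks1!l * hom (ts1!l $ r))" using u unfolding Kspan_def by blast
  obtain ks2 ts2 where 2: "v \<in> carrier_vec n" "length ks2 = length ts2" "set ts2 \<subseteq> S"
    "\<forall>r<n. v $ r = (\<Sum>l<length ts2. ks2!l * hom (ts2!l $ r))" using v unfolding Kspan_def by blast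
  have "\<forall>r<n. (u + v) $ r = (\<Sum>l<length (ts1 @ ts2). (ks1 @ ks2)!l * hom ((ts1 @ ts2)!l $ r))"
    using 1 2 by (simp add: sum_lessThan_add nth_append)
  thus "u + v \<in> Kspan hom n S" unfolding Kspan_def using 1 2
    by (intro CollectI conjI exI[of _ "ks1 @ ks2"] exI[of _ "ts1 @ ts2"]) auto
next
  fix c v assume v: "v \<in> Kspan hom n S"
  obtain ks ts where 1: "v \<in> carrier_vec n" "length ks = length ts" "set ts \<subseteq> S"
    "\<forall>r<n. v $ r = (\<Sum>l<length ts. ks!l * hom (ts!l $ r))" using v unfolding Kspan_def by blast
  have "\<forall>r<n. (c \<cdot>\<^sub>v v) $ r = (\<Sum>l<length ts. (map ((*) c) ks)!l * hom (ts!l $ r))"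
    using 1 by (simp add: sum_distrib_left mult.assoc)
  thus "c \<cdot>\<^sub>v v \<in> Kspan hom n S" unfolding Kspan_def using 1
    by (intro CollectI conjI exI[of _ "map ((*) c) ks"] exI[of _ ts]) auto
qed

lemma Kspan_mono: "S \<subseteq> T \<Longrightarrow> Kspan hom n S \<subseteq> Kspan hom n T"
  unfolding Kspan_def by blast

lemma vec_in_Kspan: "v \<in> S \<Longrightarrow> v \<in> carrier_vec n \<Longrightarrow> map_vec hom v \<in> Kspan hom n S"
  unfolding Kspan_def by (intro CollectI conjI exI[of _ "[1]"] exI[of _ "[v]"]) auto

end

context field_hom begin

lemma desc2:
  assumes inf: "infinite (UNIV::'a set)"
    and EA: "lin_eqns ns EA" and GA: "is_subgroup ns (subgrp_pts hom ns EA)"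
    and Fl: "\<forall>i<length ns. (\<forall>S\<in>Fl i. is_subspace (ns ! i) S)"
    and g1: "g1 \<in> Gset ns" and g2: "g2 \<in> Gset ns"
    and p: "p \<in> Gset ns" "\<forall>i<length ns. \<forall>S\<in>Fl i. \<forall>v\<in>Kspan hom (ns!i) S. (p!i) *\<^sub>v v \<in> Kspan hom (ns!i) S"
    and h: "h \<in> subgrp_pts hom ns EA"
    and e: "mmul (mmul p (map (map_mat hom) g1)) h = map (map_mat hom) g2"
  shows "\<exists>p0 q1. p0 \<in> Gset ns \<and> (\<forall>i<length ns. \<forall>S\<in>Fl i. \<forall>v\<in>S. (p0!i) *\<^sub>v v \<in> S)
     \<and> q1 \<in> subgrp_pts id ns EA \<and> g2 = mmul (mmul p0 g1) q1"
proof -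
  have xM: "g1 \<in> Mset ns" and yM: "g2 \<in> Mset ns" and dx: "\<forall>i<length ns. det (g1!i) \<noteq> 0"
    using g1 g2 Gset_iff by auto
  have aM: "p \<in> Mset ns" and da: "\<forall>i<length ns. det (p!i) \<noteq> 0" using p(1) unfolding Gset_iff by auto
  have bM: "h \<in> Mset ns" using h unfolding subgrp_pts_def Gset_def by auto
  obtain b' where b': "b' \<in> subgrp_pts hom ns EA" "mmul h b' = mone ns" using GA h unfolding is_subgroup_def by auto
  have b'M: "b' \<in> Mset ns" using b' unfolding subgrp_pts_def Gset_def by auto
  let ?X = "map (map_mat hom) g1" and ?Y = "map (map_mat hom) g2"
  have XM: "?X \<in> Mset ns" "?Y \<in> Mset ns" using xM yM map_Mset by auto
  have "mmul p ?X = mmul (mmul p ?X) (mmul h b')"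
    using b'(2) mmul_one_right[OF mmul_Mset[OF aM XM(1)]] by simp
  also have "\<dots> = mmul ?Y b'" using e mmul_assoc[OF mmul_Mset[OF aM XM(1)] bM b'M] by simp
  finally have eq1: "mmul p ?X = mmul ?Y b'" .
  have eqc: "\<forall>i<length ns. p!i * map_mat hom (g1!i) = map_mat hom (g2!i) * b'!i"
  proof (intro allI impI)
    fix i assume i: "i < length ns"
    from arg_cong[OF eq1, of "\<lambda>l. l!i"] show "p!i * map_mat hom (g1!i) = map_mat hom (g2!i) * b'!i"
      using i aM xM yM b'M by (simp add: mmul_nth Mset_len)
  qed
  obtain p0 q0 where pq: "p0 \<in> Mset ns" "q0 \<in> Mset ns" "\<forall>i<length ns. det (p0!i) \<noteq> 0"
    "\<forall>i<length ns. p0!i * g1!i = g2!i * q0!i"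
    "\<forall>l c. l \<in> Mset ns \<longrightarrow> lin_pair ns (map (map_mat hom) l) p = hom c \<longrightarrow> lin_pair ns l p0 = c"
    "\<forall>l c. l \<in> Mset ns \<longrightarrow> lin_pair ns (map (map_mat hom) l) b' = hom c \<longrightarrow> lin_pair ns l q0 = c"
    "\<forall>i<length ns. \<forall>S. is_subspace (ns!i) S \<longrightarrow> (\<forall>v\<in>S. p!i *\<^sub>v map_vec hom v \<in> Kspan hom (ns!i) S)
         \<longrightarrow> (\<forall>v\<in>S. p0!i *\<^sub>v v \<in> S)"
    using core[OF inf aM b'M xM yM da eqc] by (elim exE conjE) blast
  have dq: "\<forall>i<length ns. det (q0!i) \<noteq> 0"
  proof (intro allI impI)
    fix i assume i: "i < length ns"
    have c: "p0!i \<in> carrier_mat (ns!i) (ns!i)" "q0!i \<in> carrier_mat (ns!i) (ns!i)"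
      "g1!i \<in> carrier_mat (ns!i) (ns!i)" "g2!i \<in> carrier_mat (ns!i) (ns!i)"
      using pq xM yM i Mset_nth by auto
    have "det (p0!i) * det (g1!i) = det (g2!i) * det (q0!i)"
      using pq(4) i det_mult c by metis
    thus "det (q0!i) \<noteq> 0" using pq(3) dx i by auto
  qed
  have p0G: "p0 \<in> Gset ns" using pq(1,3) Gset_iff by blast
  have p0S: "\<forall>i<length ns. \<forall>S\<in>Fl i. \<forall>v\<in>S. (p0!i) *\<^sub>v v \<in> S"
  proof (intro allI impI ballI)
    fix i S v assume i: "i < length ns" and S: "S \<in> Fl i" and v: "v \<in> S"
    have Ss: "is_subspace (ns!i) S" using Fl i S by auto
    have "\<forall>v\<in>S. p!i *\<^sub>v map_vec hom v \<in> Kspan hom (ns!i) S"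
    proof
      fix w assume w: "w \<in> S"
      hence "map_vec hom w \<in> Kspan hom (ns!i) S" using vec_in_Kspan Ss unfolding is_subspace_def by blast
      thus "p!i *\<^sub>v map_vec hom w \<in> Kspan hom (ns!i) S" using p(2) i S by blast
    qed
    thus "p0!i *\<^sub>v v \<in> S" using pq(7) i Ss v by blast
  qed
  have q0B: "q0 \<in> subgrp_pts id ns EA" by (rule subgrp_F_intro[OF EA pq(2) dq b'(1) pq(6)])
  obtain q1 where q1: "q1 \<in> subgrp_pts id ns EA" "mmul q0 q1 = mone ns" using subgrp_inv[OF EA GA q0B] by auto
  have q1M: "q1 \<in> Mset ns" using q1 unfolding subgrp_pts_def Gset_def by auto
  have eq2: "mmul p0 g1 = mmul g2 q0"
    by (rule mmul_eqI[of _ ns]) (use pq xM yM in \<open>auto intro!: mmul_Mset simp: mmul_nth Mset_len\<close>)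
  have "mmul (mmul p0 g1) q1 = g2"
    using eq2 mmul_assoc[OF yM pq(2) q1M] q1(2) mmul_one_right[OF yM] by simp
  thus ?thesis using p0G p0S q1(1) by blast
qed

end

lemma one_Gset: "mone ns \<in> Gset ns"
  unfolding Gset_iff using mone_Mset by (simp add: mone_nth)

lemma stab_mult: assumes g: "g \<in> Gset ns" "\<forall>i<length ns. \<forall>S\<in>Fl i. \<forall>v\<in>S. (g!i) *\<^sub>v v \<in> S"
  and h: "h \<in> Gset ns" "\<forall>i<length ns. \<forall>S\<in>Fl i. \<forall>v\<in>S. (h!i) *\<^sub>v v \<in> S"
  and Fl: "\<forall>i<length ns. \<forall>S\<in>Fl i. S \<subseteq> carrier_vec (ns!i)"
  shows "mmul g h \<in> Gset ns \<and> (\<forall>i<length ns. \<forall>S\<in>Fl i. \<forall>v\<in>S. (mmul g h ! i) *\<^sub>v v \<in> S)"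
proof -
  have gM: "g \<in> Mset ns" "\<forall>i<length ns. det (g!i) \<noteq> 0" using g(1) unfolding Gset_iff by auto
  have hM: "h \<in> Mset ns" "\<forall>i<length ns. det (h!i) \<noteq> 0" using h(1) unfolding Gset_iff by auto
  have "mmul g h \<in> Gset ns" unfolding Gset_iff
  proof (intro conjI allI impI)
    show "mmul g h \<in> Mset ns" using gM hM mmul_Mset by blast
    fix i assume i: "i < length ns"
    show "det (mmul g h ! i) \<noteq> 0" using i gM hM Mset_nth[OF gM(1) i] Mset_nth[OF hM(1) i]
      by (simp add: mmul_nth Mset_len det_mult)
  qed
  moreover have "\<forall>i<length ns. \<forall>S\<in>Fl i. \<forall>v\<in>S. (mmul g h ! i) *\<^sub>v v \<in> S"
  proof (intro allI impI ballI)
    fix i S v assume i: "i < length ns" and S: "S \<in> Fl i" and v: "v \<in> S"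
    have vc: "v \<in> carrier_vec (ns!i)" using Fl i S v by auto
    have "(mmul g h ! i) *\<^sub>v v = g!i *\<^sub>v (h!i *\<^sub>v v)"
      using i gM hM Mset_nth[OF gM(1) i] Mset_nth[OF hM(1) i] vc by (simp add: mmul_nth Mset_len)
    thus "(mmul g h ! i) *\<^sub>v v \<in> S" using g(2) h(2) i S v by simp
  qed
  ultimately show ?thesis by blast
qed

context field_hom begin

lemma part2:
  assumes inf: "infinite (UNIV::'a set)"
    and EA: "lin_eqns ns EA" and GA: "is_subgroup ns (subgrp_pts hom ns EA)"
    and sph: "spherical_fin ns (subgrp_pts hom ns EA)"
  shows "spherical_fin ns (subgrp_pts id ns EA)"
  unfolding spherical_fin_def
proof (intro allI impI)
  fix P :: "'a mat list set" assume "parabolic ns P"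
  then obtain Fl where Fl: "\<forall>i<length ns. (\<forall>S\<in>Fl i. is_subspace (ns!i) S) \<and> (\<forall>S\<in>Fl i. \<forall>T\<in>Fl i. S \<subseteq> T \<or> T \<subseteq> S)"
    and Pd: "P = {g \<in> Gset ns. \<forall>i<length ns. \<forall>S\<in>Fl i. \<forall>v\<in>S. (g!i) *\<^sub>v v \<in> S}"
    unfolding parabolic_def by blast
  define FlK where "FlK i = Kspan hom (ns!i) ` Fl i" for i
  define PK where "PK = {g \<in> Gset ns. \<forall>i<length ns. \<forall>S\<in>FlK i. \<forall>v\<in>S. (g!i) *\<^sub>v v \<in> S}"
  define AK where "AK = subgrp_pts hom ns EA"
  define AF where "AF = subgrp_pts id ns EA"
  have "parabolic ns PK" unfolding parabolic_def
  proof (intro exI[of _ FlK] conjI allI impI)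
    fix i assume i: "i < length ns"
    show "\<forall>S\<in>FlK i. is_subspace (ns!i) S" unfolding FlK_def using Kspan_subspace by auto
    have ch: "\<forall>S\<in>Fl i. \<forall>T\<in>Fl i. S \<subseteq> T \<or> T \<subseteq> S" using Fl i by blast
    show "\<forall>S\<in>FlK i. \<forall>T\<in>FlK i. S \<subseteq> T \<or> T \<subseteq> S"
    proof (intro ballI)
      fix S T assume "S \<in> FlK i" "T \<in> FlK i"
      then obtain S0 T0 where st: "S0 \<in> Fl i" "T0 \<in> Fl i" "S = Kspan hom (ns!i) S0" "T = Kspan hom (ns!i) T0"
        unfolding FlK_def by blast
      have "S0 \<subseteq> T0 \<or> T0 \<subseteq> S0" using ch st by blast
      thus "S \<subseteq> T \<or> T \<subseteq> S" using Kspan_mono st(3,4) by metis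
    qed
  qed (simp add: PK_def)
  hence finK: "finite (double_cosets ns PK AK)" using sph unfolding spherical_fin_def AK_def by blast
  define DK where "DK g = {mmul (mmul p g) h | p h. p \<in> PK \<and> h \<in> AK}" for g
  define DF where "DF g = {mmul (mmul p g) h | p h. p \<in> P \<and> h \<in> AF}" for g
  have Fl0: "\<forall>i<length ns. \<forall>S\<in>Fl i. is_subspace (ns!i) S" using Fl by blast
  have FlC: "\<forall>i<length ns. \<forall>S\<in>Fl i. S \<subseteq> carrier_vec (ns!i)"
  proof (intro allI impI ballI)
    fix i S assume "i < length ns" "S \<in> Fl i"
    hence "is_subspace (ns!i) S" using Fl0 by blast
    thus "S \<subseteq> carrier_vec (ns!i)" unfolding is_subspace_def by simp
  qed
  have mone_PK: "mone ns \<in> PK" unfolding PK_def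
  proof (intro CollectI conjI one_Gset allI impI ballI)
    fix i S v assume i: "i < length ns" and S: "S \<in> FlK i" and v: "v \<in> S"
    have "v \<in> carrier_vec (ns!i)" using S v unfolding FlK_def Kspan_def by auto
    thus "mone ns ! i *\<^sub>v v \<in> S" using v i by (simp add: mone_nth)
  qed
  have mone_AK: "mone ns \<in> AK" using GA unfolding AK_def is_subgroup_def by blast
  have selfDK: "G \<in> DK G" if "G \<in> Mset ns" for G
    unfolding DK_def using mone_PK mone_AK mmul_one_left[OF that] mmul_one_right[OF that]
    by (intro CollectI exI[of _ "mone ns"]) auto
  have key: "DF g2 \<subseteq> DF g1" if g: "g1 \<in> Gset ns" "g2 \<in> Gset ns"
    and eqD: "DK (map (map_mat hom) g1) = DK (map (map_mat hom) g2)" for g1 g2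
  proof
    have g2M: "map (map_mat hom) g2 \<in> Mset ns" using g(2) map_Mset unfolding Gset_def by auto
    have "map (map_mat hom) g2 \<in> DK (map (map_mat hom) g1)" using selfDK[OF g2M] eqD by simp
    hence "\<exists>p h. map (map_mat hom) g2 = mmul (mmul p (map (map_mat hom) g1)) h \<and> p \<in> PK \<and> h \<in> AK"
      unfolding DK_def by simp
    then obtain p h where ph: "p \<in> PK" "h \<in> AK" "mmul (mmul p (map (map_mat hom) g1)) h = map (map_mat hom) g2"
      by auto
    have pst: "\<forall>i<length ns. \<forall>S\<in>Fl i. \<forall>v\<in>Kspan hom (ns!i) S. (p!i) *\<^sub>v v \<in> Kspan hom (ns!i) S"
      using ph(1) unfolding PK_def FlK_def by blast
    have pG: "p \<in> Gset ns" using ph(1) unfolding PK_def by blast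
    have Fl1: "\<forall>i<length ns. (\<forall>S\<in>Fl i. is_subspace (ns ! i) S)" using Fl0 by blast
    from desc2[OF inf EA GA Fl1 g pG pst ph(2)[unfolded AK_def] ph(3)]
    obtain p0 q1 where pq: "p0 \<in> Gset ns" "\<forall>i<length ns. \<forall>S\<in>Fl i. \<forall>v\<in>S. (p0!i) *\<^sub>v v \<in> S"
      "q1 \<in> AF" "g2 = mmul (mmul p0 g1) q1"
      unfolding AF_def by (elim exE conjE) blast
    fix z assume "z \<in> DF g2"
    hence "\<exists>pp hh. z = mmul (mmul pp g2) hh \<and> pp \<in> P \<and> hh \<in> AF" unfolding DF_def by simp
    then obtain pp hh where z: "pp \<in> P" "hh \<in> AF" "z = mmul (mmul pp g2) hh" by auto
    have ppG: "pp \<in> Gset ns" "\<forall>i<length ns. \<forall>S\<in>Fl i. \<forall>v\<in>S. (pp!i) *\<^sub>v v \<in> S" using z(1) Pd by auto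
    have "mmul pp p0 \<in> P" using stab_mult[OF ppG pq(1,2) FlC] Pd by blast
    moreover have "mmul q1 hh \<in> AF" using subgrp_mult[OF EA GA] pq(3) z(2) unfolding AF_def by blast
    moreover have "z = mmul (mmul (mmul pp p0) g1) (mmul q1 hh)"
    proof -
      have M: "pp \<in> Mset ns" "p0 \<in> Mset ns" "g1 \<in> Mset ns" "q1 \<in> Mset ns" "hh \<in> Mset ns"
        using ppG(1) pq(1) g(1) pq(3) z(2) unfolding Gset_def AF_def subgrp_pts_def by auto
      show ?thesis using M unfolding z(3) pq(4) by (simp add: mmul_assoc mmul_Mset)
    qed
    ultimately show "z \<in> DF g1" unfolding DF_def by auto
  qed
  define F' where "F' X = DF (SOME g. g \<in> Gset ns \<and> DK (map (map_mat hom) g) = X)" for X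
  have "double_cosets ns P AF = DF ` Gset ns" unfolding double_cosets_def DF_def by simp
  also have "\<dots> \<subseteq> F' ` (DK ` (map (map_mat hom) ` Gset ns))"
  proof
    fix Z assume "Z \<in> DF ` Gset ns"
    then obtain g where g: "g \<in> Gset ns" "Z = DF g" by blast
    define g' where "g' = (SOME g'. g' \<in> Gset ns \<and> DK (map (map_mat hom) g') = DK (map (map_mat hom) g))"
    have ex: "\<exists>g'. g' \<in> Gset ns \<and> DK (map (map_mat hom) g') = DK (map (map_mat hom) g)" using g(1) by blast
    have g': "g' \<in> Gset ns" "DK (map (map_mat hom) g') = DK (map (map_mat hom) g)"
      using someI_ex[OF ex] unfolding g'_def by auto
    have "DF g = DF g'" using key[OF g(1) g'(1)] key[OF g'(1) g(1)] g'(2) by auto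
    hence "Z = F' (DK (map (map_mat hom) g))" unfolding F'_def g'_def[symmetric] g(2) by simp
    thus "Z \<in> F' ` (DK ` (map (map_mat hom) ` Gset ns))" using g(1) by blast
  qed
  finally have sub: "double_cosets ns P AF \<subseteq> F' ` (DK ` (map (map_mat hom) ` Gset ns))" .
  have dcK: "double_cosets ns PK AK = DK ` Gset ns" unfolding double_cosets_def DK_def by simp
  have "DK ` (map (map_mat hom) ` Gset ns) \<subseteq> double_cosets ns PK AK"
    unfolding dcK using Gset_map_iff by (intro image_mono) auto
  hence "finite (DK ` (map (map_mat hom) ` Gset ns))" using finK finite_subset by blast
  thus "finite (double_cosets ns P (subgrp_pts id ns EA))" using sub finite_subset unfolding AF_def by blast
qed

end


lemma alg_closure_field_hom: "is_alg_closure \<phi> \<Longrightarrow> field_hom \<phi>"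
  unfolding is_alg_closure_def by (unfold_locales) auto

theorem proposition4p3:
  fixes \<phi> :: "'a::field \<Rightarrow> 'b::field" and ns :: "nat list" and EA EB :: "('a mat list \<times> 'a) set"
  assumes "infinite (UNIV :: 'a set)"
    and "is_alg_closure \<phi>"
    and "lin_eqns ns EA" and "lin_eqns ns EB"
    and "is_subgroup ns (subgrp_pts \<phi> ns EA)"
    and "is_subgroup ns (subgrp_pts \<phi> ns EB)"
  shows "(\<forall>x\<in>Gset ns. \<forall>y\<in>Gset ns.
            (\<exists>a\<in>subgrp_pts \<phi> ns EA. \<exists>b\<in>subgrp_pts \<phi> ns EB.
                mmul (mmul a (map (map_mat \<phi>) x)) b = map (map_mat \<phi>) y)
            \<longrightarrow> (\<exists>a\<in>subgrp_pts id ns EA. \<exists>b\<in>subgrp_pts id ns EB. mmul (mmul a x) b = y))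
       \<and> (spherical_fin ns (subgrp_pts \<phi> ns EA) \<longrightarrow> spherical_fin ns (subgrp_pts id ns EA))"
proof -
  interpret fh: field_hom \<phi> by (rule alg_closure_field_hom[OF assms(2)])
  show ?thesis
  proof (intro conjI ballI impI)
    fix x y assume x: "x \<in> Gset ns" and y: "y \<in> Gset ns"
      and "\<exists>a\<in>subgrp_pts \<phi> ns EA. \<exists>b\<in>subgrp_pts \<phi> ns EB. mmul (mmul a (map (map_mat \<phi>) x)) b = map (map_mat \<phi>) y"
    then obtain a b where ab: "a \<in> subgrp_pts \<phi> ns EA" "b \<in> subgrp_pts \<phi> ns EB"
      "mmul (mmul a (map (map_mat \<phi>) x)) b = map (map_mat \<phi>) y" by blast
    show "\<exists>a\<in>subgrp_pts id ns EA. \<exists>b\<in>subgrp_pts id ns EB. mmul (mmul a x) b = y"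
      by (rule fh.part1[OF assms(1,3,4,5,6) x y ab])
  next
    assume "spherical_fin ns (subgrp_pts \<phi> ns EA)"
    thus "spherical_fin ns (subgrp_pts id ns EA)" by (rule fh.part2[OF assms(1,3,5)])
  qed
qed

end
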